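(* Let $n\ge1$. For any $h\in\{1,\dots,n\}$ and $a\in\mathbb{Z}$, the set $T(h,a)$ of all tagged edges of $\mathcal{P}_{n,\infty}$ with starting point $(h,a)$, namely \[T(h,a)=\{E^{+1}_{(h,a),(h,a)},E^{-1}_{(h,a),(h,a)}\}\cup\{E_{(h,a),(k,b)}\mid (k,b)\text{ a boundary marked point with } (k,b)\notin\{(h,a),(h,a+1)\}\},\] is a triangulation of $\mathcal{P}_{n,\infty}$. Likewise, for any $h\in\{1,\dots,n\}$ and $a\in\mathbb{Z}\cup\{\infty\}$, the set of all tagged edges of $\mathcal{P}_{\overline{n,\infty}}$ with starting point $(h,a)$ is a triangulation of $\mathcal{P}_{\overline{n,\infty}}$.
   Context: $\mathcal{P}_{n,\infty}$: the closed unit disk $D$ with a puncture at the origin and boundary marked points $(h,a)$, $h\in\{1,\dots,n\}$, $a\in\mathbb{Z}$, arranged counterclockwise so that block $h$ is ordered by increasing $a$, the blocks appear in cyclic order $1,\dots,n$, and the marked points accumulate from both sides exactly at $n$ unmarked points $a_1,\dots,a_n$ ($a_h$ between block $h$ and block $h+1$, indices mod $n$). $\mathcal{P}_{\overline{n,\infty}}$ is the same but with each accumulation point $a_h$ also a marked point, labeled $(h,\infty)$, with the convention $\infty\pm k=\infty$. For a boundary marked point $P=(h,a)$ write $P^+=(h,a+1)$. Tagged edges: for boundary marked points $P\ne Q$ with $Q\ne P^+$, the edge $E_{P,Q}$ is the homotopy class (in $D$ minus the puncture, relative endpoints) of a simple path from $P$ to $Q$ through the interior minus the puncture, homotopic to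 the counterclockwise boundary path from $P$ to $Q$; for each boundary marked point $P$ there are two tagged edges $E^{\pm1}_{P,P}$, drawn as the segment from $P$ to the puncture, tagged when the sign is $-1$. The starting point of $E_{P,Q}$ and of $E^{\pm1}_{P,P}$ is $P$. Crossing number $\mathfrak c(E,F)$ of distinct tagged edges: if neither goes to the puncture, the minimal number of intersection points in the interior of the punctured disk among representatives; if exactly one is a puncture segment, the minimal number of interior intersection points of that segment with representatives of the other; if $E=E^{\epsilon}_{P,P}$, $F=E^{\lambda}_{Q,Q}$, then $\mathfrak c=1$ if $P\ne Q$ and $\epsilon\ne\lambda$, and $0$ otherwise. $E$ crosses $F$ if $\mathfrak c(E,F)\ne0$. A triangulation is a maximal set of pairwise non-crossing tagged edges. *)

theory Defs
  imports "HOL-Analysis.Analysis" "HOL-Library.Extended_Nat"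
begin

datatype lab = Fin int | Infty

type_synonym mpt = "nat \<times> lab"

text \<open>Marked points; the flag cl selects the closed version (accumulation points marked).\<close>
definition marked :: "nat \<Rightarrow> bool \<Rightarrow> mpt set" where
  "marked n cl = {(h, Fin a) | h a. 1 \<le> h \<and> h \<le> n}
                \<union> (if cl then {(h, Infty) | h. 1 \<le> h \<and> h \<le> n} else {})"

fun succ_pt :: "mpt \<Rightarrow> mpt" where
  "succ_pt (h, Fin a) = (h, Fin (a + 1))"
| "succ_pt (h, Infty) = (h, Infty)"

text \<open>Concrete placement: block h occupies the open arc of angles
  (2 pi (h-1)/n, 2 pi h/n), increasing in a, accumulating at both ends;
  the accumulation point a_h sits at angle 2 pi h / n.\<close>
definition sigma :: "int \<Rightarrow> real" where
  "sigma a = (1 + real_of_int a / (1 + \<bar>real_of_int a\<bar>)) / 2"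

fun angle :: "nat \<Rightarrow> mpt \<Rightarrow> real" where
  "angle n (h, Fin a) = 2 * pi * (real h - 1 + sigma a) / real n"
| "angle n (h, Infty) = 2 * pi * real h / real n"

definition pos :: "nat \<Rightarrow> mpt \<Rightarrow> complex" where
  "pos n P = cis (angle n P)"

definition ccw_path :: "nat \<Rightarrow> mpt \<Rightarrow> mpt \<Rightarrow> real \<Rightarrow> complex" where
  "ccw_path n P Q = (\<lambda>t. cis (angle n P +
      t * (2 * pi * frac ((angle n Q - angle n P) / (2 * pi)))))"

definition pdisk :: "complex set" where "pdisk = cball 0 1 - {0}"
definition pint :: "complex set" where "pint = ball 0 1 - {0}"

text \<open>Tagged edges: Arc P Q is E_{P,Q}; Punct P True / False is E^{+1}_{P,P} / E^{-1}_{P,P}.\<close>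
datatype tedge = Arc mpt mpt | Punct mpt bool

fun start :: "tedge \<Rightarrow> mpt" where
  "start (Arc P Q) = P"
| "start (Punct P s) = P"

definition tagged_edges :: "nat \<Rightarrow> bool \<Rightarrow> tedge set" where
  "tagged_edges n cl =
     {Arc P Q | P Q. P \<in> marked n cl \<and> Q \<in> marked n cl \<and> P \<noteq> Q \<and> Q \<noteq> succ_pt P}
     \<union> {Punct P s | P s. P \<in> marked n cl}"

text \<open>Representatives of the homotopy class E_{P,Q}: simple paths from P to Q through the
  interior minus the puncture, homotopic rel endpoints in D minus the puncture to the
  counterclockwise boundary path.\<close>
definition reps :: "nat \<Rightarrow> mpt \<Rightarrow> mpt \<Rightarrow> (real \<Rightarrow> complex) set" where
  "reps n P Q = {g. arc g \<and> pathstart g = pos n P \<and> pathfinish g = pos n Q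
      \<and> (\<forall>t\<in>{0<..<1}. g t \<in> pint)
      \<and> homotopic_paths pdisk g (ccw_path n P Q)}"

definition icount :: "complex set \<Rightarrow> enat" where
  "icount S = (if finite S then enat (card S) else \<infinity>)"

fun crossing :: "nat \<Rightarrow> tedge \<Rightarrow> tedge \<Rightarrow> enat" where
  "crossing n (Arc P Q) (Arc R S) =
     (INF g \<in> reps n P Q. INF g' \<in> reps n R S.
        icount (path_image g \<inter> path_image g' \<inter> pint))"
| "crossing n (Punct P s) (Arc R S) =
     (INF g' \<in> reps n R S. icount (closed_segment (pos n P) 0 \<inter> path_image g' \<inter> pint))"
| "crossing n (Arc R S) (Punct P s) =
     (INF g' \<in> reps n R S. icount (closed_segment (pos n P) 0 \<inter> path_image g' \<inter> pint))"
| "crossing n (Punct P s) (Punct Q t) = (if P \<noteq> Q \<and> s \<noteq> t then 1 else 0)"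

definition crosses :: "nat \<Rightarrow> tedge \<Rightarrow> tedge \<Rightarrow> bool" where
  "crosses n E F \<longleftrightarrow> crossing n E F \<noteq> 0"

definition tagged_triangulation :: "nat \<Rightarrow> bool \<Rightarrow> tedge set \<Rightarrow> bool" where
  "tagged_triangulation n cl T \<longleftrightarrow> T \<subseteq> tagged_edges n cl
     \<and> (\<forall>E\<in>T. \<forall>F\<in>T. E \<noteq> F \<longrightarrow> \<not> crosses n E F)
     \<and> (\<forall>E\<in>tagged_edges n cl - T. \<exists>F\<in>T. crosses n E F)"

end

theory Submission
  imports Defs "HOL-Complex_Analysis.Complex_Analysis"
begin


definition shr :: "real \<Rightarrow> real" where "shr x = x / (1 + \<bar>x\<bar>)"

lemma sigma_shr: "sigma a = (1 + shr (real_of_int a)) / 2"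
  unfolding sigma_def shr_def ..

lemma shr_abs: "\<bar>shr x\<bar> < 1"
  unfolding shr_def using real_shrink_Galois[of x "x/(1+\<bar>x\<bar>)"] by simp

lemma shr_lt: "shr x < shr y \<longleftrightarrow> x < y"
  unfolding shr_def by (rule real_shrink_lt)

lemma sigma_bounds: "0 < sigma a" "sigma a < 1"
proof -
  have "\<bar>shr (real_of_int a)\<bar> < 1" by (rule shr_abs)
  then have "- 1 < shr (real_of_int a)" "shr (real_of_int a) < 1" by linarith+
  then show "0 < sigma a" "sigma a < 1" unfolding sigma_shr by simp_all
qed

lemma sigma_mono: assumes "a < b" shows "sigma a < sigma b"
proof -
  have "shr (real_of_int a) < shr (real_of_int b)" using assms shr_lt by simp
  then show ?thesis unfolding sigma_shr by simp
qed

lemma sigma_inj: "sigma a = sigma b \<Longrightarrow> a = b"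
  using sigma_mono[of a b] sigma_mono[of b a] by (cases "a < b"; cases "b < a") auto

lemma sigma_neg: assumes "a \<le> 0" shows "sigma a = 1 / (2 * (1 - real_of_int a))"
proof -
  define x where "x = real_of_int a"
  have x: "x \<le> 0" using assms x_def by simp
  then have "\<bar>x\<bar> = - x" by simp
  then have "shr x = x / (1 - x)" unfolding shr_def by simp
  then have "sigma a = (1 + x / (1 - x)) / 2" unfolding sigma_shr x_def by simp
  also have "\<dots> = 1 / (2 * (1 - x))" using x by (simp add: field_simps)
  finally show ?thesis unfolding x_def .
qed

definition nu :: "nat \<Rightarrow> mpt \<Rightarrow> real" where "nu n P = angle n P / (2*pi)"

lemma nu_Fin: "nu n (h, Fin a) = (real h - 1 + sigma a) / real n"
  by (simp add: nu_def)
lemma nu_Infty: "nu n (h, Infty) = real h / real n"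
  by (simp add: nu_def)

lemma angle_nu: "angle n P = 2 * pi * nu n P"
  by (simp add: nu_def)

lemma marked_cases:
  assumes "P \<in> marked n cl"
  obtains h a where "P = (h, Fin a)" "1 \<le> h" "h \<le> n"
    | h where "P = (h, Infty)" "1 \<le> h" "h \<le> n" "cl"
proof -
  obtain h l where P: "P = (h, l)" by (cases P)
  show ?thesis
  proof (cases l)
    case (Fin a)
    with assms P have "1 \<le> h \<and> h \<le> n" unfolding marked_def by (auto split: if_splits)
    then show ?thesis using that(1) P Fin by blast
  next
    case Infty
    with assms P have "1 \<le> h \<and> h \<le> n \<and> cl" unfolding marked_def by (auto split: if_splits)
    then show ?thesis using that(2) P Infty by blast
  qed
qed

lemma marked_Fin: "1 \<le> h \<Longrightarrow> h \<le> n \<Longrightarrow> (h, Fin a) \<in> marked n cl"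
  unfolding marked_def by auto

lemma marked_n: "P \<in> marked n cl \<Longrightarrow> 1 \<le> n"
  by (auto elim: marked_cases)

lemma nu_bounds0: assumes "P \<in> marked n cl" shows "0 < nu n P \<and> nu n P \<le> 1"
  using assms
proof (cases rule: marked_cases)
  case (1 h a)
  have "0 < sigma a" "sigma a < 1" by (rule sigma_bounds)+
  moreover have "real h \<ge> 1" "real h \<le> real n" using 1 by simp_all
  ultimately have "0 < real h - 1 + sigma a" "real h - 1 + sigma a \<le> real n" by linarith+
  moreover have "real n > 0" using 1 by simp
  ultimately show ?thesis using 1 by (simp add: nu_Fin)
next
  case (2 h)
  then show ?thesis by (simp add: nu_Infty)
qed

lemma nu_bounds: assumes "P \<in> marked n cl" shows "0 < nu n P" "nu n P \<le> 1"
  using nu_bounds0[OF assms] by auto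

lemma not_int_between: "real_of_int k = x \<Longrightarrow> 0 < x \<Longrightarrow> x < 1 \<Longrightarrow> False"
proof -
  assume a: "real_of_int k = x" "0 < x" "x < 1"
  then have "0 < k" "k < 1" by linarith+
  then show False by simp
qed

lemma nu_inj: assumes "P \<in> marked n cl" "Q \<in> marked n cl" "nu n P = nu n Q" shows "P = Q"
proof -
  have n: "real n > 0" using marked_n[OF assms(1)] by simp
  show ?thesis
  using assms(1)
  proof (cases rule: marked_cases)
    case P: (1 h a)
    show ?thesis using assms(2)
    proof (cases rule: marked_cases)
      case Q: (1 k b)
      have e: "real h - 1 + sigma a = real k - 1 + sigma b"
        using assms(3) n P Q by (simp add: nu_Fin)
      have "real h - real k = sigma b - sigma a" using e by simp
      then have "\<bar>real h - real k\<bar> < 1" using sigma_bounds[of a] sigma_bounds[of b] by linarith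
      moreover have "\<bar>real h - real k\<bar> = real_of_int \<bar>int h - int k\<bar>" by simp
      ultimately have "\<bar>int h - int k\<bar> < 1" by linarith
      then have "h = k" by simp
      with e have "a = b" using sigma_inj by simp
      with P Q \<open>h = k\<close> show ?thesis by simp
    next
      case Q: (2 k)
      have e: "real h - 1 + sigma a = real k"
        using assms(3) n P Q by (simp add: nu_Fin nu_Infty)
      then have "real_of_int (int k - int h + 1) = sigma a" by simp
      then show ?thesis using sigma_bounds[of a] not_int_between by blast
    qed
  next
    case P: (2 h)
    show ?thesis using assms(2)
    proof (cases rule: marked_cases)
      case Q: (1 k b)
      have e: "real k - 1 + sigma b = real h"
        using assms(3) n P Q by (simp add: nu_Fin nu_Infty)
      then have "real_of_int (int h - int k + 1) = sigma b" by simp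
      then show ?thesis using sigma_bounds[of b] not_int_between by blast
    next
      case Q: (2 k)
      then show ?thesis using assms(3) n P by (simp add: nu_Infty)
    qed
  qed
qed



lemma frac_pos_small: "0 \<le> x \<Longrightarrow> x < 1 \<Longrightarrow> frac x = x"
  by (simp add: frac_eq)

lemma frac_neg_small: "-1 \<le> x \<Longrightarrow> x < 0 \<Longrightarrow> frac x = x + 1"
  unfolding frac_unique_iff by simp

definition dd :: "nat \<Rightarrow> mpt \<Rightarrow> mpt \<Rightarrow> real" where
  "dd n A B = frac (nu n B - nu n A)"

lemma dd_val:
  assumes "A \<in> marked n cl" "B \<in> marked n cl"
  shows "dd n A B = (if nu n A \<le> nu n B then nu n B - nu n A else nu n B - nu n A + 1)"
  using nu_bounds[OF assms(1)] nu_bounds[OF assms(2)] unfolding dd_def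
  by (auto simp: frac_pos_small frac_neg_small)

lemma dd_lt1: "dd n A B < 1" unfolding dd_def by (rule frac_lt_1)
lemma dd_ge0: "0 \<le> dd n A B" unfolding dd_def by simp

lemma dd_pos: assumes "A \<in> marked n cl" "B \<in> marked n cl" "A \<noteq> B" shows "0 < dd n A B"
proof -
  have "nu n A \<noteq> nu n B" using nu_inj assms by blast
  then show ?thesis using dd_val[OF assms(1,2)] nu_bounds[OF assms(1)] nu_bounds[OF assms(2)]
    by (auto split: if_splits)
qed

lemma dd_eq0: assumes "A \<in> marked n cl" "B \<in> marked n cl" "dd n A B = 0" shows "A = B"
  using dd_pos[OF assms(1,2)] assms(3) by force

lemma dd_inj: assumes "A \<in> marked n cl" "B \<in> marked n cl" "C \<in> marked n cl" "dd n A B = dd n A C"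
  shows "B = C"
proof -
  have "nu n B = nu n C"
    using assms(4) dd_val[OF assms(1,2)] dd_val[OF assms(1,3)] nu_bounds[OF assms(1)]
      nu_bounds[OF assms(2)] nu_bounds[OF assms(3)]
    by (auto split: if_splits)
  then show ?thesis using nu_inj assms(2,3) by blast
qed

lemma frac_cmp:
  fixes n y e :: real
  assumes "n \<ge> 1" "- n < y" "y < n" "0 < e"
    "y \<ge> 0 \<Longrightarrow> e < y" "y < 0 \<Longrightarrow> e < y + n"
  shows "e / n < frac (y / n)"
proof (cases "y \<ge> 0")
  case True
  then have "frac (y / n) = y / n" using assms by (intro frac_pos_small) (simp_all add: divide_simps)
  then show ?thesis using assms True by (simp add: divide_strict_right_mono)
next
  case False
  then have "frac (y / n) = y / n + 1" using assms by (intro frac_neg_small) (simp_all add: divide_simps)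
  also have "\<dots> = (y + n) / n" using assms by (simp add: field_simps)
  finally show ?thesis using assms False by (simp add: divide_strict_right_mono)
qed

lemma real_nat_step: "real j < real k \<Longrightarrow> real j + 1 \<le> real k"
proof -
  assume "real j < real k"
  then have "j + 1 \<le> k" by simp
  then show ?thesis by (metis of_nat_1 of_nat_add of_nat_le_iff)
qed

lemma dd_succ:
  assumes A: "(k, Fin b) \<in> marked n cl" and S: "S \<in> marked n cl"
    and "S \<noteq> (k, Fin b)" "S \<noteq> (k, Fin (b + 1))"
  shows "dd n (k, Fin b) (k, Fin (b + 1)) < dd n (k, Fin b) S"
proof -
  have k: "1 \<le> k" "k \<le> n" using A unfolding marked_def by (auto split: if_splits)
  have n1: "real n \<ge> 1" using k by simp
  have sb: "0 < sigma b" "sigma b < 1" "0 < sigma (b+1)" "sigma (b+1) < 1" by (rule sigma_bounds)+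
  have sbb: "sigma b < sigma (b+1)" by (rule sigma_mono) simp
  define e where "e = sigma (b+1) - sigma b"
  have e0: "0 < e" using sbb e_def by simp
  have "dd n (k, Fin b) (k, Fin (b + 1)) = frac (e / real n)"
    unfolding dd_def nu_Fin e_def using n1 by (intro arg_cong[where f=frac]) (simp add: field_simps)
  also have "\<dots> = e / real n"
    using e0 n1 sb e_def by (intro frac_pos_small) (simp_all add: divide_simps)
  finally have dX: "dd n (k, Fin b) (k, Fin (b + 1)) = e / real n" .
  show ?thesis using S
  proof (cases rule: marked_cases)
    case (1 j c)
    define y where "y = real j - real k + sigma c - sigma b"
    have sc: "0 < sigma c" "sigma c < 1" by (rule sigma_bounds)+
    have dS: "dd n (k, Fin b) S = frac (y / real n)"
      unfolding dd_def 1 nu_Fin y_def using n1 by (intro arg_cong[where f=frac]) (simp add: field_simps)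
    have jr: "1 \<le> real j" "real j \<le> real n" "1 \<le> real k" "real k \<le> real n" using 1 k by simp_all
    have "e / real n < frac (y / real n)"
    proof (rule frac_cmp[OF n1 _ _ e0])
      show "- real n < y" "y < real n" using jr sc sb y_def by linarith+
    next
      assume y0: "0 \<le> y"
      show "e < y"
      proof (cases "j = k")
        case True
        with y0 have "sigma b \<le> sigma c" using y_def by simp
        then have "b \<le> c" using sigma_mono[of c b] by force
        moreover have "c \<noteq> b" "c \<noteq> b + 1" using assms(3,4) 1 True by auto
        ultimately have "b + 1 < c" by simp
        then have "sigma (b+1) < sigma c" by (rule sigma_mono)
        then show ?thesis using True y_def e_def by simp
      next
        case False
        have "real j \<ge> real k"
        proof (rule ccontr)
          assume "\<not> real j \<ge> real k"
          then have "real j + 1 \<le> real k" using real_nat_step by simp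
          then show False using y0 y_def sc sb by linarith
        qed
        then have "real j \<ge> real k + 1" using False real_nat_step[of k j] by simp
        then show ?thesis using y_def e_def sc sb by linarith
      qed
    next
      assume y0: "y < 0"
      show "e < y + real n"
      proof (cases "j = k")
        case True
        then show ?thesis using y_def e_def sc sb n1 by linarith
      next
        case False
        have "real j < real k"
        proof (rule ccontr)
          assume "\<not> real j < real k"
          then have "real k + 1 \<le> real j" using False real_nat_step[of k j] by simp
          then show False using y0 y_def sc sb by linarith
        qed
        then show ?thesis using y_def e_def sc sb jr by linarith
      qed
    qed
    then show ?thesis using dX dS by simp
  next
    case (2 j)
    define y where "y = real j - real k + 1 - sigma b"
    have dS: "dd n (k, Fin b) S = frac (y / real n)"
      unfolding dd_def 2 nu_Fin nu_Infty y_def using n1 by (intro arg_cong[where f=frac]) (simp add: field_simps)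
    have jr: "1 \<le> real j" "real j \<le> real n" "1 \<le> real k" "real k \<le> real n" using 2 k by simp_all
    have "e / real n < frac (y / real n)"
    proof (rule frac_cmp[OF n1 _ _ e0])
      show "- real n < y" "y < real n" using jr sb y_def by linarith+
    next
      assume y0: "0 \<le> y"
      have "real j \<ge> real k"
      proof (rule ccontr)
        assume "\<not> real j \<ge> real k"
        then have "real j + 1 \<le> real k" using real_nat_step by simp
        then show False using y0 y_def sb by linarith
      qed
      then show "e < y" using y_def e_def sb by linarith
    next
      assume y0: "y < 0"
      then show "e < y + real n" using y_def e_def sb jr by linarith
    qed
    then show ?thesis using dX dS by simp
  qed
qed



lemma sigma_small:
  assumes "0 < eps"
  obtains c where "c < N" "sigma c < eps"
proof -
  define c where "c = - ceiling (1 / eps) - \<bar>N\<bar> - 1"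
  have cp: "1 \<le> ceiling (1 / eps)" using assms by (simp add: one_le_ceiling)
  have "- \<bar>N\<bar> \<le> N" "0 \<le> \<bar>N\<bar>" by simp_all
  then have c0: "c \<le> 0" and cN: "c < N" using cp c_def by linarith+
  have s: "sigma c = 1 / (2 * (1 - real_of_int c))" using sigma_neg[OF c0] .
  have "1 - real_of_int c \<ge> 1 / eps + 2"
  proof -
    have "real_of_int (ceiling (1 / eps)) \<ge> 1 / eps" by (rule le_of_int_ceiling)
    moreover have "real_of_int c = - real_of_int (ceiling (1 / eps)) - real_of_int \<bar>N\<bar> - 1"
      using c_def by simp
    moreover have "real_of_int \<bar>N\<bar> \<ge> 0" by simp
    ultimately show ?thesis by linarith
  qed
  then have "eps * (1 - real_of_int c) \<ge> eps * (1 / eps + 2)"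
    using assms by (intro mult_left_mono) simp_all
  also have "eps * (1 / eps + 2) = 1 + 2 * eps" using assms by (simp add: field_simps)
  finally have "2 * eps * (1 - real_of_int c) > 1" using assms by linarith
  moreover have "1 - real_of_int c > 0" using c0 by simp
  ultimately have "1 / (2 * (1 - real_of_int c)) < eps" by (simp add: field_simps)
  then show ?thesis using that cN s by simp
qed

definition nxt :: "nat \<Rightarrow> nat \<Rightarrow> nat" where "nxt n k = (if k < n then k + 1 else 1)"

lemma dd_infty_next:
  assumes A: "(k, Infty) \<in> marked n cl" and eps: "0 < eps"
  obtains c where "c < N" "(nxt n k, Fin c) \<in> marked n cl" "dd n (k, Infty) (nxt n k, Fin c) < eps"
proof -
  have k: "1 \<le> k" "k \<le> n" using A unfolding marked_def by (auto split: if_splits)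
  have n1: "real n \<ge> 1" using k by simp
  obtain c where c: "c < N" "sigma c < eps" using sigma_small[OF eps] by blast
  have sc: "0 < sigma c" "sigma c < 1" by (rule sigma_bounds)+
  have m: "(nxt n k, Fin c) \<in> marked n cl" using k unfolding nxt_def by (intro marked_Fin) auto
  have "nu n (nxt n k, Fin c) - nu n (k, Infty) = sigma c / real n - (if k < n then 0 else 1)"
    using n1 k unfolding nxt_def nu_Fin nu_Infty by (auto simp: field_simps)
  then have "dd n (k, Infty) (nxt n k, Fin c) = frac (sigma c / real n)"
    unfolding dd_def by (cases "k < n") (simp_all add: frac_1_eq[of "sigma c / real n - 1", simplified])
  also have "\<dots> = sigma c / real n" using sc n1 by (intro frac_pos_small) (simp_all add: divide_simps)
  also have "\<dots> \<le> sigma c" using sc n1 by (simp add: divide_simps)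
  finally have "dd n (k, Infty) (nxt n k, Fin c) < eps" using c by simp
  then show ?thesis using that c m by blast
qed

lemma exists_X:
  assumes R: "R \<in> marked n cl" and S: "S \<in> marked n cl" and P: "P \<in> marked n cl"
    and RS: "R \<noteq> S" "S \<noteq> succ_pt R" and PR: "P \<noteq> R" and le: "dd n R S \<le> dd n R P"
  obtains X where "X \<in> marked n cl" "X \<noteq> P" "X \<noteq> succ_pt P" "0 < dd n R X" "dd n R X < dd n R S"
  using R
proof (cases rule: marked_cases)
  case (1 k b)
  define X where "X = (k, Fin (b + 1))"
  have Xm: "X \<in> marked n cl" using 1 X_def by (simp add: marked_Fin)
  have lt: "dd n R X < dd n R S" using dd_succ[of k b n cl S] 1 R S RS X_def by auto
  have pos: "0 < dd n R X" using dd_pos[OF R Xm] 1 X_def by auto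
  have XP: "X \<noteq> P" using lt le by auto
  have XsP: "X \<noteq> succ_pt P"
  proof
    assume "X = succ_pt P"
    then show False using P PR 1 X_def by (cases rule: marked_cases[OF P]) auto
  qed
  show ?thesis using that Xm XP XsP pos lt by blast
next
  case (2 k)
  have eps: "0 < dd n R S" using dd_pos[OF R S RS(1)] .
  define N where "N = (case P of (j, Fin a) \<Rightarrow> a + 1 | _ \<Rightarrow> 0)"
  obtain c where c: "c < N" "(nxt n k, Fin c) \<in> marked n cl" "dd n R (nxt n k, Fin c) < dd n R S"
    using dd_infty_next[of k n cl "dd n R S" N] 2 R eps by blast
  define X where "X = (nxt n k, Fin c)"
  have Xm: "X \<in> marked n cl" using c X_def by simp
  have pos: "0 < dd n R X" using dd_pos[OF R Xm] 2 X_def by auto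
  have XP: "X \<noteq> P" using c le X_def by auto
  have XsP: "X \<noteq> succ_pt P"
  proof
    assume a: "X = succ_pt P"
    show False using P
    proof (cases rule: marked_cases)
      case (1 j a')
      then show False using a c(1) X_def N_def by simp
    next
      case (2 j)
      then show False using a X_def by simp
    qed
  qed
  show ?thesis using that Xm XP XsP pos c X_def by blast
qed



lemma cis_shift: "cis (x + 2 * pi * real_of_int k) = cis x"
proof -
  have "cis (2 * pi * real_of_int k) = 1" by (rule cis_multiple_2pi) simp
  then show ?thesis by (simp add: cis_mult[symmetric])
qed

lemma cis_eq_imp: assumes "cis a = cis b" shows "\<exists>k::int. a = b + 2 * pi * real_of_int k"
proof -
  have "exp (\<i> * complex_of_real a) = exp (\<i> * complex_of_real b)" using assms by (simp add: cis_conv_exp)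
  then obtain m :: int where "\<i> * complex_of_real a = \<i> * complex_of_real b + (of_int (2 * m) * pi) * \<i>"
    unfolding exp_eq by blast
  then have "Im (\<i> * complex_of_real a) = Im (\<i> * complex_of_real b + (of_int (2 * m) * pi) * \<i>)" by simp
  then have "a = b + 2 * pi * real_of_int m" by simp
  then show ?thesis by blast
qed

lemma polar_eq:
  assumes "r1 > 0" "r2 > 0" "complex_of_real r1 * cis a = complex_of_real r2 * cis b"
  shows "r1 = r2" "\<exists>k::int. a = b + 2 * pi * real_of_int k"
proof -
  have "norm (complex_of_real r1 * cis a) = norm (complex_of_real r2 * cis b)" using assms(3) by simp
  then show r: "r1 = r2" using assms(1,2) by (simp add: norm_mult)
  then have "cis a = cis b" using assms by simp
  then show "\<exists>k::int. a = b + 2 * pi * real_of_int k" by (rule cis_eq_imp)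
qed

lemma angle_dd:
  "angle n A + 2 * pi * dd n A B = angle n B - 2 * pi * real_of_int (floor (nu n B - nu n A))"
proof -
  have gen: "\<And>a b c :: real. 2 * pi * a + 2 * pi * (b - a - c) = 2 * pi * b - 2 * pi * c"
    by (simp add: algebra_simps)
  show ?thesis unfolding dd_def frac_def angle_nu by (rule gen)
qed

lemma cis_angle_dd: "cis (angle n A + 2 * pi * dd n A B) = pos n B"
proof -
  have "cis (angle n A + 2 * pi * dd n A B) = cis (angle n B + 2 * pi * real_of_int (- floor (nu n B - nu n A)))"
    unfolding angle_dd by simp
  also have "\<dots> = cis (angle n B)" by (rule cis_shift)
  finally show ?thesis unfolding pos_def .
qed

lemma ccw_path_dd: "ccw_path n A B = (\<lambda>t. cis (angle n A + t * (2 * pi * dd n A B)))"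
proof -
  have gen: "\<And>a b :: real. (2 * pi * b - 2 * pi * a) / (2 * pi) = b - a"
    by (simp add: right_diff_distrib[symmetric])
  have "(angle n B - angle n A) / (2 * pi) = nu n B - nu n A" unfolding angle_nu by (rule gen)
  then show ?thesis unfolding ccw_path_def dd_def by simp
qed

definition rep :: "nat \<Rightarrow> mpt \<Rightarrow> mpt \<Rightarrow> real \<Rightarrow> complex" where
  "rep n A B = (\<lambda>t. complex_of_real (1 - t * (1 - t) * dd n A B / 2) * cis (angle n A + t * (2 * pi * dd n A B)))"

lemma rho_bounds:
  fixes t d :: real
  assumes "0 \<le> t" "t \<le> 1" "0 \<le> d" "d < 1"
  shows "1/2 < 1 - t * (1 - t) * d / 2" "1 - t * (1 - t) * d / 2 \<le> 1"
proof -
  have x0: "0 \<le> t * (1 - t)" using assms by simp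
  have "t * (1 - t) \<le> t" using assms by (intro mult_left_le) simp_all
  then have x1: "t * (1 - t) \<le> 1" using assms by linarith
  have "t * (1 - t) * d \<le> d" using x0 x1 assms by (intro mult_left_le_one_le) simp_all
  moreover have "0 \<le> t * (1 - t) * d" using x0 assms by simp
  ultimately show "1/2 < 1 - t * (1 - t) * d / 2" "1 - t * (1 - t) * d / 2 \<le> 1" using assms by linarith+
qed

lemma rho_lt1:
  fixes t d :: real
  assumes "0 < t" "t < 1" "0 < d"
  shows "1 - t * (1 - t) * d / 2 < 1"
proof -
  have "0 < t * (1 - t)" using assms by simp
  then have "0 < t * (1 - t) * d" using assms by simp
  then show ?thesis by linarith
qed

lemma norm_rep:
  assumes "t \<in> {0..1}"
  shows "norm (rep n A B t) = 1 - t * (1 - t) * dd n A B / 2"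
proof -
  have t: "0 \<le> t" "t \<le> 1" using assms by auto
  have "1/2 < 1 - t * (1 - t) * dd n A B / 2" by (rule rho_bounds(1)[OF t dd_ge0 dd_lt1])
  then have "0 < 1 - t * (1 - t) * dd n A B / 2" by linarith
  moreover have "norm (rep n A B t) = \<bar>1 - t * (1 - t) * dd n A B / 2\<bar> * norm (cis (angle n A + t * (2 * pi * dd n A B)))"
    by (simp only: rep_def norm_mult norm_of_real)
  ultimately show ?thesis by simp
qed

lemma path_rep: "path (rep n A B)"
  unfolding path_def rep_def by (intro continuous_intros) auto

lemma rep_start: "pathstart (rep n A B) = pos n A"
  unfolding pathstart_def rep_def pos_def by simp

lemma rep_finish: "pathfinish (rep n A B) = pos n B"
  unfolding pathfinish_def rep_def using cis_angle_dd[of n A B] by simp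

lemma rep_inj:
  assumes "A \<in> marked n cl" "B \<in> marked n cl" "A \<noteq> B"
  shows "inj_on (rep n A B) {0..1}"
proof (rule inj_onI)
  fix s t assume st: "s \<in> {0..1}" "t \<in> {0..1}" "rep n A B s = rep n A B t"
  define d where "d = dd n A B"
  have d: "0 < d" "d < 1" using dd_pos[OF assms] dd_lt1 d_def by auto
  have p1: "0 < 1 - s * (1 - s) * d / 2" "0 < 1 - t * (1 - t) * d / 2"
    using rho_bounds[of s d] rho_bounds[of t d] st d by auto
  obtain k :: int where k: "angle n A + s * (2 * pi * d) = angle n A + t * (2 * pi * d) + 2 * pi * real_of_int k"
    using polar_eq(2)[OF p1 st(3)[unfolded rep_def d_def[symmetric]]] by blast
  then have "2 * pi * ((s - t) * d) = 2 * pi * real_of_int k" by (simp add: algebra_simps)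
  then have "(s - t) * d = real_of_int k" by simp
  moreover have "\<bar>(s - t) * d\<bar> < 1"
  proof -
    have "\<bar>s - t\<bar> \<le> 1" using st by auto
    then have "\<bar>s - t\<bar> * d \<le> d" using d by (intro mult_left_le_one_le) simp_all
    then have "\<bar>s - t\<bar> * d < 1" using d by linarith
    moreover have "\<bar>d\<bar> = d" using d by simp
    ultimately show ?thesis by (simp add: abs_mult)
  qed
  ultimately have "\<bar>real_of_int k\<bar> < 1" by simp
  then have "k = 0" by linarith
  then have "(s - t) * d = 0" using \<open>(s - t) * d = real_of_int k\<close> by simp
  then show "s = t" using d by simp
qed

lemma rep_pint:
  assumes "A \<in> marked n cl" "B \<in> marked n cl" "A \<noteq> B" "t \<in> {0<..<1}"
  shows "rep n A B t \<in> pint"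
proof -
  have d: "0 < dd n A B" "dd n A B < 1" using dd_pos[OF assms(1-3)] dd_lt1 by auto
  have "norm (rep n A B t) = 1 - t * (1 - t) * dd n A B / 2" using norm_rep assms(4) by auto
  moreover have "1/2 < 1 - t * (1 - t) * dd n A B / 2" using rho_bounds[of t "dd n A B"] assms(4) d by auto
  moreover have "1 - t * (1 - t) * dd n A B / 2 < 1" using rho_lt1[of t "dd n A B"] assms(4) d by auto
  ultimately show ?thesis unfolding pint_def by auto
qed

lemma rep_homotopic:
  assumes "A \<in> marked n cl" "B \<in> marked n cl" "A \<noteq> B"
  shows "homotopic_paths pdisk (rep n A B) (ccw_path n A B)"
proof (rule homotopic_paths_linear)
  show "path (rep n A B)" by (rule path_rep)
  show "path (ccw_path n A B)" unfolding ccw_path_dd path_def by (intro continuous_intros)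
  show "pathstart (ccw_path n A B) = pathstart (rep n A B)"
    unfolding ccw_path_dd rep_def pathstart_def by simp
  show "pathfinish (ccw_path n A B) = pathfinish (rep n A B)"
    unfolding ccw_path_dd rep_def pathfinish_def by simp
next
  fix t :: real assume t: "t \<in> {0..1}"
  define r where "r = 1 - t * (1 - t) * dd n A B / 2"
  define w where "w = cis (angle n A + t * (2 * pi * dd n A B))"
  have r: "1/2 < r" "r \<le> 1" using rho_bounds[of t "dd n A B"] t dd_ge0 dd_lt1 r_def by auto
  have e1: "rep n A B t = complex_of_real r * w" unfolding rep_def r_def w_def by simp
  have e2: "ccw_path n A B t = w" unfolding ccw_path_dd w_def by simp
  show "closed_segment (rep n A B t) (ccw_path n A B t) \<subseteq> pdisk"
  proof
    fix z assume "z \<in> closed_segment (rep n A B t) (ccw_path n A B t)"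
    then obtain u where u: "0 \<le> u" "u \<le> 1" "z = (1 - u) *\<^sub>R (complex_of_real r * w) + u *\<^sub>R w"
      unfolding closed_segment_def e1 e2 by auto
    then have z: "z = complex_of_real ((1 - u) * r + u) * w" by (simp add: scaleR_conv_of_real algebra_simps)
    have "0 \<le> u * (1 - r)" using u r by simp
    moreover have "(1 - u) * r + u = r + u * (1 - r)" by (simp add: algebra_simps)
    ultimately have p: "0 < (1 - u) * r + u" using r by linarith
    have "(1 - u) * r \<le> 1 - u" using u r by (intro mult_left_le) simp_all
    then have q: "(1 - u) * r + u \<le> 1" by linarith
    have "norm w = 1" unfolding w_def by simp
    then have "norm z = \<bar>(1 - u) * r + u\<bar>" unfolding z norm_mult norm_of_real by simp
    then have "norm z = (1 - u) * r + u" using p by simp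
    then show "z \<in> pdisk" unfolding pdisk_def using p q by auto
  qed
qed

lemma rep_in_reps:
  assumes "A \<in> marked n cl" "B \<in> marked n cl" "A \<noteq> B"
  shows "rep n A B \<in> reps n A B"
  unfolding reps_def
  using rep_inj[OF assms] path_rep rep_start rep_finish rep_pint[OF assms] rep_homotopic[OF assms]
  by (auto simp: arc_def)



lemma ccw_part: "ccw_path n A B = part_circlepath 0 1 (angle n A) (angle n A + 2 * pi * dd n A B)"
proof
  fix x :: real
  have e: "(1 - x) *\<^sub>R angle n A + x *\<^sub>R (angle n A + 2 * pi * dd n A B) = angle n A + x * (2 * pi * dd n A B)"
    by (simp add: algebra_simps)
  show "ccw_path n A B x = part_circlepath 0 1 (angle n A) (angle n A + 2 * pi * dd n A B) x"
    unfolding ccw_path_dd part_circlepath_def linepath_def e by (simp add: cis_conv_exp)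
qed

lemma wn_ccw:
  assumes "A \<in> marked n cl" "B \<in> marked n cl" "A \<noteq> B"
  shows "winding_number (ccw_path n A B) 0 = complex_of_real (dd n A B)"
proof -
  define a where "a = angle n A"
  define b where "b = angle n A + 2 * pi * dd n A B"
  have d: "0 < dd n A B" using dd_pos[OF assms] .
  have ab: "a < b" using d a_def b_def by simp
  have c: "ccw_path n A B = part_circlepath 0 1 a b" unfolding ccw_part a_def b_def ..
  have nz: "0 \<notin> path_image (part_circlepath 0 1 a b)"
    unfolding path_image_part_circlepath' by auto
  have "winding_number (part_circlepath 0 1 a b) 0
      = 1 / (2 * pi * \<i>) * contour_integral (part_circlepath 0 1 a b) (\<lambda>w. 1 / (w - 0))"
    by (rule winding_number_valid_path[OF valid_path_part_circlepath nz])
  also have "contour_integral (part_circlepath 0 1 a b) (\<lambda>w. 1 / (w - 0))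
      = integral {a..b} (\<lambda>t. 1 / (0 + complex_of_real 1 * cis t - 0) * complex_of_real 1 * \<i> * cis t)"
    by (rule contour_integral_part_circlepath_eq[OF ab])
  also have "(\<lambda>t. 1 / (0 + complex_of_real 1 * cis t - 0) * complex_of_real 1 * \<i> * cis t) = (\<lambda>t. \<i>)"
  proof
    fix t
    have "cis t \<noteq> 0" by simp
    then show "1 / (0 + complex_of_real 1 * cis t - 0) * complex_of_real 1 * \<i> * cis t = \<i>"
      by (simp add: field_simps)
  qed
  also have "integral {a..b} (\<lambda>t. \<i>) = (b - a) *\<^sub>R \<i>" using ab by simp
  finally have "winding_number (part_circlepath 0 1 a b) 0 = 1 / (2 * pi * \<i>) * ((b - a) *\<^sub>R \<i>)" .
  also have "\<dots> = complex_of_real (dd n A B)" unfolding a_def b_def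
    by (simp add: scaleR_conv_of_real field_simps)
  finally show ?thesis unfolding c .
qed

lemma reps_facts:
  assumes "g \<in> reps n A B"
  shows "arc g" "g 0 = pos n A" "g 1 = pos n B" "\<And>t. t \<in> {0<..<1} \<Longrightarrow> g t \<in> pint"
    "homotopic_paths pdisk g (ccw_path n A B)"
  using assms unfolding reps_def pathstart_def pathfinish_def by auto

lemma norm_pos [simp]: "norm (pos n P) = 1" unfolding pos_def by simp

lemma reps_norm:
  assumes "g \<in> reps n A B" "t \<in> {0..1}"
  shows "0 < norm (g t)" "norm (g t) \<le> 1" "norm (g t) = 1 \<Longrightarrow> t = 0 \<or> t = 1"
proof -
  have "t = 0 \<or> t = 1 \<or> t \<in> {0<..<1}" using assms(2) by auto
  then have "(t = 0 \<or> t = 1) \<and> norm (g t) = 1 \<or> (t \<in> {0<..<1} \<and> g t \<in> pint)"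
    using reps_facts[OF assms(1)] by auto
  then show "0 < norm (g t)" "norm (g t) \<le> 1" "norm (g t) = 1 \<Longrightarrow> t = 0 \<or> t = 1"
    unfolding pint_def by auto
qed

lemma reps_nz: assumes "g \<in> reps n A B" shows "0 \<notin> path_image g"
  using reps_norm(1)[OF assms] unfolding path_image_def by force

lemma lift:
  assumes A: "A \<in> marked n cl" and B: "B \<in> marked n cl" and AB: "A \<noteq> B" and g: "g \<in> reps n A B"
  shows "\<exists>\<theta>. continuous_on {0..1} \<theta> \<and> (\<forall>t\<in>{0..1}. g t = complex_of_real (norm (g t)) * cis (\<theta> t))
     \<and> \<theta> 0 = angle n A \<and> \<theta> 1 = angle n A + 2 * pi * dd n A B"
proof -
  have pg: "path g" using reps_facts(1)[OF g] by (rule arc_imp_path)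
  obtain q where q: "path q" "pathfinish q - pathstart q = 2 * of_real pi * \<i> * winding_number g 0"
      "\<And>t. t \<in> {0..1} \<Longrightarrow> g t = 0 + exp (q t)"
    using winding_number_as_continuous_log[OF pg reps_nz[OF g]] by blast
  have "homotopic_paths (-{0}) g (ccw_path n A B)"
    using homotopic_paths_subset[OF reps_facts(5)[OF g]] unfolding pdisk_def by auto
  then have "winding_number g 0 = winding_number (ccw_path n A B) 0"
    by (rule winding_number_homotopic_paths)
  also have "\<dots> = complex_of_real (dd n A B)" by (rule wn_ccw[OF A B AB])
  finally have q10: "q 1 - q 0 = 2 * of_real pi * \<i> * complex_of_real (dd n A B)"
    using q(2) unfolding pathstart_def pathfinish_def by simp
  have gpol: "g t = complex_of_real (exp (Re (q t))) * cis (Im (q t))" if "t \<in> {0..1}" for t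
    using q(3)[OF that] by (simp add: exp_eq_polar)
  have gnorm: "norm (g t) = exp (Re (q t))" if "t \<in> {0..1}" for t
    using gpol[OF that] by (simp add: norm_mult)
  have "complex_of_real (exp (Re (q 0))) * cis (Im (q 0)) = complex_of_real 1 * cis (angle n A)"
    using gpol[of 0] reps_facts(2)[OF g] unfolding pos_def by simp
  then obtain k :: int where k: "Im (q 0) = angle n A + 2 * pi * real_of_int k"
    using polar_eq(2)[of "exp (Re (q 0))" 1] by auto
  define \<theta> where "\<theta> t = Im (q t) - Im (q 0) + angle n A" for t
  have cont: "continuous_on {0..1} \<theta>"
    using q(1) unfolding \<theta>_def path_def by (intro continuous_intros)
  have cth: "cis (\<theta> t) = cis (Im (q t))" for t
  proof -
    have "\<theta> t = Im (q t) + 2 * pi * real_of_int (- k)" unfolding \<theta>_def k by simp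
    then show ?thesis by (simp only: cis_shift)
  qed
  have rep: "\<forall>t\<in>{0..1}. g t = complex_of_real (norm (g t)) * cis (\<theta> t)"
    using gpol gnorm cth by simp
  have t0: "\<theta> 0 = angle n A" unfolding \<theta>_def by simp
  have "Im (q 1) - Im (q 0) = Im (q 1 - q 0)" by simp
  also have "\<dots> = 2 * pi * dd n A B" unfolding q10 by simp
  finally have t1: "\<theta> 1 = angle n A + 2 * pi * dd n A B" unfolding \<theta>_def by simp
  show ?thesis using cont rep t0 t1 by blast
qed



lemma icount_empty: "icount {} = 0" unfolding icount_def by (simp add: zero_enat_def)

lemma icount_ne0: "S \<noteq> {} \<Longrightarrow> icount S \<noteq> 0"
  unfolding icount_def by (auto simp: zero_enat_def)

lemma INF_ne0:
  fixes f :: "'a \<Rightarrow> enat"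
  assumes "\<And>x. x \<in> A \<Longrightarrow> f x \<noteq> 0"
  shows "(INF x\<in>A. f x) \<noteq> 0"
proof -
  have "1 \<le> (INF x\<in>A. f x)"
  proof (rule INF_greatest)
    fix x assume "x \<in> A"
    then have "0 < f x" using assms by simp
    then have "eSuc 0 \<le> f x" by (rule ileI1)
    then show "1 \<le> f x" by (simp add: one_eSuc)
  qed
  then show ?thesis by auto
qed

lemma twopi_mono: "(x::real) < y \<Longrightarrow> 2 * pi * x < 2 * pi * y"
  using pi_gt_zero by simp

lemma cross_punct:
  assumes R: "R \<in> marked n cl" and S: "S \<in> marked n cl" and P: "P \<in> marked n cl"
    and RS: "R \<noteq> S" and PR: "P \<noteq> R" and lt: "dd n R P < dd n R S" and g: "g \<in> reps n R S"
  shows "closed_segment (pos n P) 0 \<inter> path_image g \<inter> pint \<noteq> {}"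
proof -
  obtain \<theta> where th: "continuous_on {0..1} \<theta>"
      "\<And>t. t\<in>{0..1} \<Longrightarrow> g t = complex_of_real (norm (g t)) * cis (\<theta> t)"
      "\<theta> 0 = angle n R" "\<theta> 1 = angle n R + 2 * pi * dd n R S"
    using lift[OF R S RS g] by blast
  define v where "v = angle n R + 2 * pi * dd n R P"
  have dP: "0 < dd n R P" using dd_pos[OF R P] PR by auto
  have v0: "\<theta> 0 < v" unfolding th(3) v_def using twopi_mono[OF dP] by simp
  have v1: "v < \<theta> 1" unfolding th(4) v_def using twopi_mono[OF lt] by simp
  obtain t where t: "0 \<le> t" "t \<le> 1" "\<theta> t = v" using IVT'[of \<theta> 0 v 1] v0 v1 th(1) by auto
  have t01: "t \<in> {0<..<1}" using t v0 v1 by (cases "t = 0"; cases "t = 1") auto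
  have gi: "g t \<in> pint" using reps_facts(4)[OF g t01] .
  have gt: "g t = complex_of_real (norm (g t)) * pos n P"
    using th(2)[of t] t cis_angle_dd[of n R P] unfolding v_def by simp
  have r: "0 < norm (g t)" "norm (g t) < 1" using gi unfolding pint_def by auto
  have "g t \<in> closed_segment (pos n P) 0"
    unfolding closed_segment_def
  proof (intro CollectI exI conjI)
    show "g t = (1 - (1 - norm (g t))) *\<^sub>R pos n P + (1 - norm (g t)) *\<^sub>R 0"
      using gt by (simp add: scaleR_conv_of_real)
  qed (use r in auto)
  moreover have "g t \<in> path_image g" unfolding path_image_def using t by auto
  ultimately show ?thesis using gi by blast
qed

definition mk2 :: "real \<Rightarrow> real \<Rightarrow> real^2" where
  "mk2 x y = (\<chi> i. if i = 1 then x else y)"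

lemma mk2_1 [simp]: "mk2 x y $ 1 = x" unfolding mk2_def by simp
lemma mk2_2 [simp]: "mk2 x y $ 2 = y" unfolding mk2_def by simp

lemma mk2_eq: "mk2 x y = mk2 x' y' \<Longrightarrow> x = x' \<and> y = y'"
  by (metis mk2_1 mk2_2)

lemma cont_mk2:
  assumes "continuous_on S f" "continuous_on S g"
  shows "continuous_on S (\<lambda>t. mk2 (f t) (g t))"
  unfolding mk2_def
proof (intro continuous_on_vec_lambda)
  fix i :: 2
  show "continuous_on S (\<lambda>t. if i = 1 then f t else g t)"
    using assms by (cases "i = 1") simp_all
qed

lemma mk2_cbox: "mk2 x y \<in> cbox (mk2 a1 a2) (mk2 b1 b2) \<longleftrightarrow> a1 \<le> x \<and> x \<le> b1 \<and> a2 \<le> y \<and> y \<le> b2"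
  unfolding mem_box_cart forall_2 by simp

lemma bounded_fun:
  assumes "continuous_on {0..1::real} (f :: real \<Rightarrow> real)"
  obtains M where "\<And>t. t \<in> {0..1} \<Longrightarrow> \<bar>f t\<bar> \<le> M"
proof -
  have "compact (f ` {0..1})" by (rule compact_continuous_image[OF assms compact_Icc])
  then have "bounded (f ` {0..1})" by (rule compact_imp_bounded)
  then obtain M where "\<forall>x\<in>f ` {0..1}. norm x \<le> M" unfolding bounded_iff by blast
  then show ?thesis using that[of M] by auto
qed



lemma dd_PX:
  assumes R: "R \<in> marked n cl" and P: "P \<in> marked n cl" and X: "X \<in> marked n cl"
    and lt: "dd n R X < dd n R P"
  shows "dd n P X = dd n R X - dd n R P + 1"
proof -
  have "dd n P X = frac (nu n X - nu n P)" unfolding dd_def ..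
  also have "\<dots> = dd n R X - dd n R P + 1"
  proof (subst frac_unique_iff, intro conjI)
    have "nu n X - nu n P - (dd n R X - dd n R P + 1)
        = real_of_int (floor (nu n X - nu n R) - floor (nu n P - nu n R) - 1)"
      unfolding dd_def frac_def by simp
    then show "nu n X - nu n P - (dd n R X - dd n R P + 1) \<in> \<int>" by (metis Ints_of_int)
    show "0 \<le> dd n R X - dd n R P + 1" using dd_ge0[of n R X] dd_lt1[of n R P] by linarith
    show "dd n R X - dd n R P + 1 < 1" using lt by linarith
  qed
  finally show ?thesis .
qed

lemma angle_P:
  "angle n P = angle n R + 2 * pi * dd n R P + 2 * pi * real_of_int (floor (nu n P - nu n R))"
proof -
  have gen: "\<And>a b c :: real. 2 * pi * b = 2 * pi * a + 2 * pi * (b - a - c) + 2 * pi * c"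
    by (simp add: algebra_simps)
  show ?thesis unfolding dd_def frac_def angle_nu by (rule gen)
qed

lemma cross_arcs:
  assumes R: "R \<in> marked n cl" and S: "S \<in> marked n cl" and P: "P \<in> marked n cl"
    and X: "X \<in> marked n cl"
    and RS: "R \<noteq> S" and PX: "P \<noteq> X"
    and X0: "0 < dd n R X" and XS: "dd n R X < dd n R S" and SP: "dd n R S \<le> dd n R P"
    and g: "g \<in> reps n R S" and g': "g' \<in> reps n P X"
  shows "path_image g \<inter> path_image g' \<inter> pint \<noteq> {}"
proof -
  define dX where "dX = dd n R X"
  define dS where "dS = dd n R S"
  define dP where "dP = dd n R P"
  define aR where "aR = angle n R"
  define m where "m = floor (nu n P - nu n R)"
  have dP1: "dP < 1" unfolding dP_def by (rule dd_lt1)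
  have XP: "dX < dP" using XS SP dX_def dS_def dP_def by simp
  obtain \<theta> where th: "continuous_on {0..1} \<theta>"
      "\<And>t. t\<in>{0..1} \<Longrightarrow> g t = complex_of_real (norm (g t)) * cis (\<theta> t)"
      "\<theta> 0 = aR" "\<theta> 1 = aR + 2 * pi * dS"
    using lift[OF R S RS g] unfolding aR_def dS_def by blast
  obtain \<theta>' where th': "continuous_on {0..1} \<theta>'"
      "\<And>t. t\<in>{0..1} \<Longrightarrow> g' t = complex_of_real (norm (g' t)) * cis (\<theta>' t)"
      "\<theta>' 0 = angle n P" "\<theta>' 1 = angle n P + 2 * pi * dd n P X"
    using lift[OF P X PX g'] by blast
  have dPX: "dd n P X = dX - dP + 1" using dd_PX[OF R P X] XP dX_def dP_def by simp
  have aP: "angle n P = aR + 2 * pi * dP + 2 * pi * real_of_int m"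
    unfolding aR_def dP_def m_def by (rule angle_P)
  define F0 where "F0 = aR + 2 * pi * dP"
  define G0 where "G0 = aR + 2 * pi"
  define F1 where "F1 = aR + 2 * pi * (1 + dX)"
  define G1 where "G1 = aR + 2 * pi * (1 + dS)"
  have o1: "F0 < G0" unfolding F0_def G0_def using twopi_mono[OF dP1] by simp
  have o2: "G0 < F1" unfolding G0_def F1_def using twopi_mono[of 1 "1 + dX"] X0 dX_def by simp
  have o3: "F1 < G1" unfolding F1_def G1_def using twopi_mono[of "1 + dX" "1 + dS"] XS dX_def dS_def by simp
  define f where "f t = mk2 (\<theta>' t - 2 * pi * real_of_int m) (- norm (g' t))" for t
  define h where "h t = mk2 (\<theta> t + 2 * pi) (- norm (g t))" for t
  have pg: "path g" using reps_facts(1)[OF g] by (rule arc_imp_path)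
  have pg': "path g'" using reps_facts(1)[OF g'] by (rule arc_imp_path)
  have pf: "path f" unfolding path_def f_def
    using th'(1) pg' unfolding path_def by (intro cont_mk2 continuous_intros)
  have ph: "path h" unfolding path_def h_def
    using th(1) pg unfolding path_def by (intro cont_mk2 continuous_intros)
  have f0: "\<theta>' 0 - 2 * pi * real_of_int m = F0" unfolding th'(3) aP F0_def by simp
  have f1: "\<theta>' 1 - 2 * pi * real_of_int m = F1" unfolding th'(4) aP F1_def dPX by (simp add: algebra_simps)
  have h0: "\<theta> 0 + 2 * pi = G0" unfolding th(3) G0_def by simp
  have h1: "\<theta> 1 + 2 * pi = G1" unfolding th(4) G1_def by (simp add: algebra_simps)
  have n0: "norm (g 0) = 1" "norm (g 1) = 1" "norm (g' 0) = 1" "norm (g' 1) = 1"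
    using reps_facts(2,3)[OF g] reps_facts(2,3)[OF g'] by simp_all
  obtain M where M: "\<And>t. t \<in> {0..1} \<Longrightarrow> \<bar>\<theta> t\<bar> \<le> M" using bounded_fun[OF th(1)] by blast
  obtain M' where M': "\<And>t. t \<in> {0..1} \<Longrightarrow> \<bar>\<theta>' t\<bar> \<le> M'" using bounded_fun[OF th'(1)] by blast
  define K where "K = M + M' + \<bar>2 * pi * real_of_int m\<bar> + 2 * pi"
  have Mp: "0 \<le> M" "0 \<le> M'" using M[of 0] M'[of 0] by auto
  have pi0: "0 < pi" by (rule pi_gt_zero)
  have fbox: "path_image f \<subseteq> cbox (mk2 (- K) (- 1)) (mk2 K 0)"
  proof
    fix z assume "z \<in> path_image f"
    then obtain t where t: "t \<in> {0..1}" "z = f t" unfolding path_image_def by auto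
    have "\<bar>\<theta>' t\<bar> \<le> M'" using M' t by simp
    moreover have "\<bar>2 * pi * real_of_int m\<bar> \<ge> 2 * pi * real_of_int m" "\<bar>2 * pi * real_of_int m\<bar> \<ge> - (2 * pi * real_of_int m)" by simp_all
    ultimately have "- K \<le> \<theta>' t - 2 * pi * real_of_int m" "\<theta>' t - 2 * pi * real_of_int m \<le> K"
      unfolding K_def using Mp pi0 by linarith+
    moreover have "0 < norm (g' t)" "norm (g' t) \<le> 1" using reps_norm[OF g' t(1)] by simp_all
    ultimately show "z \<in> cbox (mk2 (- K) (- 1)) (mk2 K 0)" unfolding t(2) f_def mk2_cbox by simp
  qed
  have hbox: "path_image h \<subseteq> cbox (mk2 (- K) (- 1)) (mk2 K 0)"
  proof
    fix z assume "z \<in> path_image h"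
    then obtain t where t: "t \<in> {0..1}" "z = h t" unfolding path_image_def by auto
    have "\<bar>\<theta> t\<bar> \<le> M" using M t by simp
    moreover have "0 \<le> \<bar>2 * pi * real_of_int m\<bar>" by simp
    ultimately have "- K \<le> \<theta> t + 2 * pi" "\<theta> t + 2 * pi \<le> K"
      unfolding K_def using Mp pi0 by linarith+
    moreover have "0 < norm (g t)" "norm (g t) \<le> 1" using reps_norm[OF g t(1)] by simp_all
    ultimately show "z \<in> cbox (mk2 (- K) (- 1)) (mk2 K 0)" unfolding t(2) h_def mk2_cbox by simp
  qed
  obtain z where z: "z \<in> path_image f" "z \<in> path_image h"
  proof (rule fashoda_interlace[OF pf ph fbox hbox])
    show "pathstart f $ 2 = mk2 (- K) (- 1) $ 2" "pathfinish f $ 2 = mk2 (- K) (- 1) $ 2"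
      "pathstart h $ 2 = mk2 (- K) (- 1) $ 2" "pathfinish h $ 2 = mk2 (- K) (- 1) $ 2"
      unfolding pathstart_def pathfinish_def f_def h_def using n0 by simp_all
    show "pathstart f $ 1 < pathstart h $ 1" "pathstart h $ 1 < pathfinish f $ 1"
      "pathfinish f $ 1 < pathfinish h $ 1"
      unfolding pathstart_def pathfinish_def f_def h_def using f0 f1 h0 h1 o1 o2 o3 by simp_all
  qed
  obtain t1 where t1: "t1 \<in> {0..1}" "z = f t1" using z(1) unfolding path_image_def by auto
  obtain t2 where t2: "t2 \<in> {0..1}" "z = h t2" using z(2) unfolding path_image_def by auto
  have eq: "\<theta>' t1 - 2 * pi * real_of_int m = \<theta> t2 + 2 * pi" "norm (g' t1) = norm (g t2)"
    using mk2_eq[of "\<theta>' t1 - 2 * pi * real_of_int m" "- norm (g' t1)" "\<theta> t2 + 2 * pi" "- norm (g t2)"]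
      t1(2) t2(2) unfolding f_def h_def by auto
  have "\<theta>' t1 = \<theta> t2 + 2 * pi * real_of_int (m + 1)" using eq(1) by (simp add: algebra_simps)
  then have ceq: "cis (\<theta>' t1) = cis (\<theta> t2)" by (simp only: cis_shift)
  have w: "g' t1 = g t2" using th(2)[OF t2(1)] th'(2)[OF t1(1)] eq(2) ceq by simp
  have "g t2 \<in> pint"
  proof (cases "t2 \<in> {0<..<1}")
    case True
    then show ?thesis using reps_facts(4)[OF g] by blast
  next
    case False
    then have t2e: "t2 = 0 \<or> t2 = 1" using t2(1) by auto
    then have "norm (g t2) = 1" using n0 by auto
    then have "norm (g' t1) = 1" using eq(2) by simp
    then have t1e: "t1 = 0 \<or> t1 = 1" using reps_norm(3)[OF g' t1(1)] by simp
    have "\<theta>' t1 - 2 * pi * real_of_int m = F0 \<or> \<theta>' t1 - 2 * pi * real_of_int m = F1"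
      using t1e f0 f1 by auto
    moreover have "\<theta> t2 + 2 * pi = G0 \<or> \<theta> t2 + 2 * pi = G1" using t2e h0 h1 by auto
    ultimately have False using eq(1) o1 o2 o3 by auto
    then show ?thesis ..
  qed
  moreover have "g t2 \<in> path_image g" using t2(1) unfolding path_image_def by auto
  moreover have "g t2 \<in> path_image g'" using t1(1) w unfolding path_image_def by force
  ultimately show ?thesis by blast
qed



lemma arc_te: "Arc P Q \<in> tagged_edges n cl \<longleftrightarrow> P \<in> marked n cl \<and> Q \<in> marked n cl \<and> P \<noteq> Q \<and> Q \<noteq> succ_pt P"
proof
  assume "Arc P Q \<in> tagged_edges n cl"
  then show "P \<in> marked n cl \<and> Q \<in> marked n cl \<and> P \<noteq> Q \<and> Q \<noteq> succ_pt P"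
    unfolding tagged_edges_def by blast
next
  assume a: "P \<in> marked n cl \<and> Q \<in> marked n cl \<and> P \<noteq> Q \<and> Q \<noteq> succ_pt P"
  show "Arc P Q \<in> tagged_edges n cl" unfolding tagged_edges_def
    by (rule UnI1) (use a in blast)
qed

lemma punct_te: "Punct P s \<in> tagged_edges n cl \<longleftrightarrow> P \<in> marked n cl"
proof
  assume "Punct P s \<in> tagged_edges n cl"
  then show "P \<in> marked n cl" unfolding tagged_edges_def by blast
next
  assume a: "P \<in> marked n cl"
  show "Punct P s \<in> tagged_edges n cl" unfolding tagged_edges_def
    by (rule UnI2) (use a in blast)
qed

lemma rep_form:
  assumes "t \<in> {0..1}"
  shows "rep n A B t = complex_of_real (1 - t * (1 - t) * dd n A B / 2) * cis (angle n A + t * (2 * pi * dd n A B))"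
  unfolding rep_def ..

lemma rep_norm_lt1:
  assumes "t \<in> {0..1}" "rep n A B t \<in> pint"
  shows "t \<in> {0<..<1}" "0 < 1 - t * (1 - t) * dd n A B / 2"
proof -
  have "norm (rep n A B t) < 1" using assms(2) unfolding pint_def by auto
  then have "t \<noteq> 0" "t \<noteq> 1" using norm_rep[OF assms(1)] by auto
  then show "t \<in> {0<..<1}" using assms(1) by auto
  have "1/2 < 1 - t * (1 - t) * dd n A B / 2"
    using rho_bounds(1)[OF _ _ dd_ge0 dd_lt1] assms(1) by auto
  then show "0 < 1 - t * (1 - t) * dd n A B / 2" by linarith
qed

lemma small_int: "0 < x \<Longrightarrow> x < 1 \<Longrightarrow> x = real_of_int k \<Longrightarrow> False"
  using not_int_between by metis

lemma nc_seg:
  assumes P: "P \<in> marked n cl" and Q: "Q \<in> marked n cl" and PQ: "P \<noteq> Q"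
  shows "closed_segment (pos n P) 0 \<inter> path_image (rep n P Q) \<inter> pint = {}"
proof (rule ccontr)
  assume "closed_segment (pos n P) 0 \<inter> path_image (rep n P Q) \<inter> pint \<noteq> {}"
  then obtain w where w: "w \<in> closed_segment (pos n P) 0" "w \<in> path_image (rep n P Q)" "w \<in> pint" by blast
  obtain t where t: "t \<in> {0..1}" "w = rep n P Q t" using w(2) unfolding path_image_def by auto
  have t01: "t \<in> {0<..<1}" and rp: "0 < 1 - t * (1 - t) * dd n P Q / 2"
    using rep_norm_lt1[OF t(1)] w(3) t(2) by auto
  obtain u where u: "0 \<le> u" "u \<le> 1" "w = (1 - u) *\<^sub>R pos n P + u *\<^sub>R 0"
    using w(1) unfolding closed_segment_def by auto
  have wu: "w = complex_of_real (1 - u) * cis (angle n P)" using u(3) unfolding pos_def by (simp add: scaleR_conv_of_real)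
  have "w \<noteq> 0" using w(3) unfolding pint_def by auto
  then have u1: "0 < 1 - u" using wu u by auto
  have "complex_of_real (1 - t * (1 - t) * dd n P Q / 2) * cis (angle n P + t * (2 * pi * dd n P Q))
      = complex_of_real (1 - u) * cis (angle n P)"
    using t(2) wu unfolding rep_def by simp
  then obtain k :: int where k: "angle n P + t * (2 * pi * dd n P Q) = angle n P + 2 * pi * real_of_int k"
    using polar_eq(2)[OF rp u1] by blast
  then have "2 * pi * (t * dd n P Q) = 2 * pi * real_of_int k" by (simp add: algebra_simps)
  then have td: "t * dd n P Q = real_of_int k" by simp
  have d: "0 < dd n P Q" "dd n P Q < 1" using dd_pos[OF P Q PQ] dd_lt1 by auto
  have "0 < t * dd n P Q" using t01 d by simp
  moreover have "t * dd n P Q < 1"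
  proof -
    have "t * dd n P Q \<le> dd n P Q" using t01 d by (intro mult_left_le_one_le) simp_all
    then show ?thesis using d by linarith
  qed
  ultimately show False using td small_int by blast
qed

lemma nc_rep:
  assumes P: "P \<in> marked n cl" and Q: "Q \<in> marked n cl" and Q': "Q' \<in> marked n cl"
    and PQ: "P \<noteq> Q" and PQ': "P \<noteq> Q'" and QQ: "Q \<noteq> Q'"
  shows "path_image (rep n P Q) \<inter> path_image (rep n P Q') \<inter> pint = {}"
proof (rule ccontr)
  assume "path_image (rep n P Q) \<inter> path_image (rep n P Q') \<inter> pint \<noteq> {}"
  then obtain w where w: "w \<in> path_image (rep n P Q)" "w \<in> path_image (rep n P Q')" "w \<in> pint" by blast
  obtain s where s: "s \<in> {0..1}" "w = rep n P Q s" using w(1) unfolding path_image_def by auto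
  obtain t where t: "t \<in> {0..1}" "w = rep n P Q' t" using w(2) unfolding path_image_def by auto
  define d where "d = dd n P Q"
  define d' where "d' = dd n P Q'"
  have s01: "s \<in> {0<..<1}" and rs: "0 < 1 - s * (1 - s) * d / 2"
    using rep_norm_lt1[OF s(1)] w(3) s(2) d_def by auto
  have t01: "t \<in> {0<..<1}" and rt: "0 < 1 - t * (1 - t) * d' / 2"
    using rep_norm_lt1[OF t(1)] w(3) t(2) d'_def by auto
  have eqw: "complex_of_real (1 - s * (1 - s) * d / 2) * cis (angle n P + s * (2 * pi * d))
      = complex_of_real (1 - t * (1 - t) * d' / 2) * cis (angle n P + t * (2 * pi * d'))"
    using s(2) t(2) unfolding rep_def d_def d'_def by simp
  obtain k :: int where k: "angle n P + s * (2 * pi * d) = angle n P + t * (2 * pi * d') + 2 * pi * real_of_int k"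
    using polar_eq(2)[OF rs rt eqw] by blast
  have rho: "1 - s * (1 - s) * d / 2 = 1 - t * (1 - t) * d' / 2" using polar_eq(1)[OF rs rt eqw] .
  have d: "0 < d" "d < 1" using dd_pos[OF P Q PQ] dd_lt1 d_def by auto
  have d': "0 < d'" "d' < 1" using dd_pos[OF P Q' PQ'] dd_lt1 d'_def by auto
  have "2 * pi * (s * d - t * d') = 2 * pi * real_of_int k" using k by (simp add: algebra_simps)
  then have kd: "s * d - t * d' = real_of_int k" by simp
  have sd: "0 < s * d" "s * d < 1"
  proof -
    show "0 < s * d" using s01 d by simp
    have "s * d \<le> d" using s01 d by (intro mult_left_le_one_le) simp_all
    then show "s * d < 1" using d by linarith
  qed
  have td: "0 < t * d'" "t * d' < 1"
  proof -
    show "0 < t * d'" using t01 d' by simp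
    have "t * d' \<le> d'" using t01 d' by (intro mult_left_le_one_le) simp_all
    then show "t * d' < 1" using d' by linarith
  qed
  have "\<bar>real_of_int k\<bar> < 1" using kd sd td by linarith
  then have "k = 0" by linarith
  then have phi: "s * d = t * d'" using kd by simp
  have e1: "s * (1 - s) * d = t * (1 - t) * d'" using rho by simp
  have "s * d * (1 - s) = t * d' * (1 - t)" using e1 by (simp add: mult_ac)
  then have "t * d' * (1 - s) = t * d' * (1 - t)" using phi by simp
  moreover have "t * d' \<noteq> 0" using td(1) by linarith
  ultimately have "1 - s = 1 - t" by (metis mult_left_cancel)
  then have "s = t" by simp
  then have "d = d'" using phi s01 by simp
  then show False using dd_inj[OF P Q Q'] QQ d_def d'_def by simp
qed

lemma cross_le_zero: "(x::enat) \<le> 0 \<Longrightarrow> x = 0" by (simp add: ile0_eq)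

lemma tri:
  assumes P: "P \<in> marked n cl"
  shows "tagged_triangulation n cl {E \<in> tagged_edges n cl. start E = P}"
  unfolding tagged_triangulation_def
proof (intro conjI)
  let ?T = "{E \<in> tagged_edges n cl. start E = P}"
  show "?T \<subseteq> tagged_edges n cl" by blast
  show "\<forall>E\<in>?T. \<forall>F\<in>?T. E \<noteq> F \<longrightarrow> \<not> crosses n E F"
  proof (intro ballI impI)
    fix E F assume E: "E \<in> ?T" and F: "F \<in> ?T" and EF: "E \<noteq> F"
    show "\<not> crosses n E F"
    proof (cases E)
      case (Arc P1 Q)
      then have EA: "E = Arc P Q" "Q \<in> marked n cl" "P \<noteq> Q" using E arc_te by auto
      show ?thesis
      proof (cases F)
        case (Arc P2 Q')
        then have FA: "F = Arc P Q'" "Q' \<in> marked n cl" "P \<noteq> Q'" using F arc_te by auto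
        have QQ: "Q \<noteq> Q'" using EA FA EF by auto
        have "crossing n E F \<le> icount (path_image (rep n P Q) \<inter> path_image (rep n P Q') \<inter> pint)"
          unfolding EA(1) FA(1) crossing.simps
          by (rule INF_lower2[OF rep_in_reps[OF P EA(2,3)]], rule INF_lower[OF rep_in_reps[OF P FA(2,3)]])
        also have "\<dots> = 0" unfolding nc_rep[OF P EA(2) FA(2) EA(3) FA(3) QQ] by (rule icount_empty)
        finally show ?thesis unfolding crosses_def by (simp add: ile0_eq)
      next
        case (Punct P2 s)
        then have FP: "F = Punct P s" using F by auto
        have "crossing n E F \<le> icount (closed_segment (pos n P) 0 \<inter> path_image (rep n P Q) \<inter> pint)"
          unfolding EA(1) FP crossing.simps by (rule INF_lower[OF rep_in_reps[OF P EA(2,3)]])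
        also have "\<dots> = 0" unfolding nc_seg[OF P EA(2,3)] by (rule icount_empty)
        finally show ?thesis unfolding crosses_def by (simp add: ile0_eq)
      qed
    next
      case (Punct P1 s)
      then have EP: "E = Punct P s" using E by auto
      show ?thesis
      proof (cases F)
        case (Arc P2 Q)
        then have FA: "F = Arc P Q" "Q \<in> marked n cl" "P \<noteq> Q" using F arc_te by auto
        have "crossing n E F \<le> icount (closed_segment (pos n P) 0 \<inter> path_image (rep n P Q) \<inter> pint)"
          unfolding EP FA(1) crossing.simps by (rule INF_lower[OF rep_in_reps[OF P FA(2,3)]])
        also have "\<dots> = 0" unfolding nc_seg[OF P FA(2,3)] by (rule icount_empty)
        finally show ?thesis unfolding crosses_def by (simp add: ile0_eq)
      next
        case (Punct P2 s')
        then have FP: "F = Punct P s'" using F by auto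
        show ?thesis unfolding crosses_def EP FP by simp
      qed
    qed
  qed
  show "\<forall>E\<in>tagged_edges n cl - ?T. \<exists>F\<in>?T. crosses n E F"
  proof
    fix E assume E: "E \<in> tagged_edges n cl - ?T"
    show "\<exists>F\<in>?T. crosses n E F"
    proof (cases E)
      case (Punct R s)
      then have R: "R \<noteq> P" using E by auto
      have "Punct P (\<not> s) \<in> ?T" using P punct_te by auto
      moreover have "crosses n E (Punct P (\<not> s))" unfolding crosses_def Punct using R by auto
      ultimately show ?thesis by blast
    next
      case (Arc R S)
      then have RP: "R \<noteq> P" and ES: "R \<in> marked n cl" "S \<in> marked n cl" "R \<noteq> S" "S \<noteq> succ_pt R"
        using E arc_te by auto
      show ?thesis
      proof (cases "dd n R P < dd n R S")
        case True
        have "Punct P True \<in> ?T" using P punct_te by auto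
        moreover have "crosses n E (Punct P True)"
          unfolding crosses_def Arc crossing.simps
          using cross_punct[OF ES(1,2) P ES(3) RP[symmetric] True] by (intro INF_ne0 icount_ne0)
        ultimately show ?thesis by blast
      next
        case False
        then have le: "dd n R S \<le> dd n R P" by simp
        obtain X where X: "X \<in> marked n cl" "X \<noteq> P" "X \<noteq> succ_pt P" "0 < dd n R X" "dd n R X < dd n R S"
          using exists_X[OF ES(1,2) P ES(3,4) RP[symmetric] le] by blast
        have "Arc P X \<in> ?T" using P X arc_te by auto
        moreover have "crosses n E (Arc P X)"
          unfolding crosses_def Arc crossing.simps
          using cross_arcs[OF ES(1,2) P X(1) ES(3) X(2)[symmetric] X(4,5) le]
          by (intro INF_ne0 icount_ne0) blast
        ultimately show ?thesis by blast
      qed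
    qed
  qed
qed

theorem lemma4p2:
  fixes n h :: nat
  assumes "1 \<le> n" and "1 \<le> h" and "h \<le> n"
  shows "(\<forall>a::int. tagged_triangulation n False
             {E \<in> tagged_edges n False. start E = (h, Fin a)})
       \<and> (\<forall>a::lab. tagged_triangulation n True
             {E \<in> tagged_edges n True. start E = (h, a)})"
proof (intro conjI allI)
  fix a :: int
  show "tagged_triangulation n False {E \<in> tagged_edges n False. start E = (h, Fin a)}"
    using assms by (intro tri marked_Fin)
next
  fix a :: lab
  have "(h, a) \<in> marked n True" using assms unfolding marked_def by (cases a) auto
  then show "tagged_triangulation n True {E \<in> tagged_edges n True. start E = (h, a)}"
    by (rule tri)
qed

end
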